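(* Let $E$ be a finite set and $\tau:2^E\to 2^E$. If $(E,\tau)$ is a violator space, then for every $X\subseteq E$, $ex(X)=\bigcap\{B\subseteq X:\tau(B)=\tau(X)\}$. If $(E,\tau)$ is a convex space, then for every $X\subseteq E$, $ex(X)\subseteq\bigcap\{B\subseteq X:\tau(B)=\tau(X)\}$.
   Context: $(E,\tau)$ is a violator space if (C1) $Y\subseteq\tau(Y)$ for all $Y$, and (C22) $F\subseteq G\subseteq\tau(F)$ implies $\tau(G)=\tau(F)$. $(E,\tau)$ is a convex space if (C1) holds and (convexity) for all $Y_1\subseteq Y_2\subseteq Y_3\subseteq E$ with $\tau(Y_1)=\tau(Y_3)$ we have $\tau(Y_2)=\tau(Y_1)$. An element $x\in X$ is an extreme point of $X$ if $x\notin\tau(X-\{x\})$; $ex(X)$ is the set of extreme points of $X$. *)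

theory Defs
  imports Main
begin

definition violator_space :: "'a set \<Rightarrow> ('a set \<Rightarrow> 'a set) \<Rightarrow> bool" where
  "violator_space E \<tau> \<longleftrightarrow>
     (\<forall>Y. Y \<subseteq> E \<longrightarrow> \<tau> Y \<subseteq> E) \<and>
     (\<forall>Y. Y \<subseteq> E \<longrightarrow> Y \<subseteq> \<tau> Y) \<and>
     (\<forall>F G. F \<subseteq> G \<and> G \<subseteq> \<tau> F \<and> G \<subseteq> E \<longrightarrow> \<tau> G = \<tau> F)"

definition convex_space :: "'a set \<Rightarrow> ('a set \<Rightarrow> 'a set) \<Rightarrow> bool" where
  "convex_space E \<tau> \<longleftrightarrow>
     (\<forall>Y. Y \<subseteq> E \<longrightarrow> \<tau> Y \<subseteq> E) \<and>
     (\<forall>Y. Y \<subseteq> E \<longrightarrow> Y \<subseteq> \<tau> Y) \<and>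
     (\<forall>Y1 Y2 Y3. Y1 \<subseteq> Y2 \<and> Y2 \<subseteq> Y3 \<and> Y3 \<subseteq> E \<and> \<tau> Y1 = \<tau> Y3 \<longrightarrow> \<tau> Y2 = \<tau> Y1)"

definition ex :: "('a set \<Rightarrow> 'a set) \<Rightarrow> 'a set \<Rightarrow> 'a set" where
  "ex \<tau> X = {x \<in> X. x \<notin> \<tau> (X - {x})}"

end

theory Submission
  imports Defs
begin

lemma viol_parts:
  assumes "violator_space E \<tau>"
  shows "\<And>Y. Y \<subseteq> E \<Longrightarrow> Y \<subseteq> \<tau> Y"
    and "\<And>F G. F \<subseteq> G \<Longrightarrow> G \<subseteq> \<tau> F \<Longrightarrow> G \<subseteq> E \<Longrightarrow> \<tau> G = \<tau> F"
proof -
  note V = assms[unfolded violator_space_def]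
  note V2 = conjunct1[OF conjunct2[OF V]]
  note V3 = conjunct2[OF conjunct2[OF V]]
  show "\<And>Y. Y \<subseteq> E \<Longrightarrow> Y \<subseteq> \<tau> Y" using V2 by blast
  show "\<And>F G. F \<subseteq> G \<Longrightarrow> G \<subseteq> \<tau> F \<Longrightarrow> G \<subseteq> E \<Longrightarrow> \<tau> G = \<tau> F"
    using V3 by blast
qed

lemma conv_parts:
  assumes "convex_space E \<tau>"
  shows "\<And>Y. Y \<subseteq> E \<Longrightarrow> Y \<subseteq> \<tau> Y"
    and "\<And>Y1 Y2 Y3. Y1 \<subseteq> Y2 \<Longrightarrow> Y2 \<subseteq> Y3 \<Longrightarrow> Y3 \<subseteq> E \<Longrightarrow> \<tau> Y1 = \<tau> Y3 \<Longrightarrow> \<tau> Y2 = \<tau> Y1"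
proof -
  note V = assms[unfolded convex_space_def]
  note V2 = conjunct1[OF conjunct2[OF V]]
  note V3 = conjunct2[OF conjunct2[OF V]]
  show "\<And>Y. Y \<subseteq> E \<Longrightarrow> Y \<subseteq> \<tau> Y" using V2 by blast
  show "\<And>Y1 Y2 Y3. Y1 \<subseteq> Y2 \<Longrightarrow> Y2 \<subseteq> Y3 \<Longrightarrow> Y3 \<subseteq> E \<Longrightarrow> \<tau> Y1 = \<tau> Y3 \<Longrightarrow> \<tau> Y2 = \<tau> Y1"
    using V3 by (metis (no_types))
qed

lemma ex_mem: "x \<in> ex \<tau> X \<longleftrightarrow> x \<in> X \<and> x \<notin> \<tau> (X - {x})"
  unfolding ex_def by simp

lemma viol_sub:
  assumes V: "violator_space E \<tau>" and XE: "X \<subseteq> E"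
    and x: "x \<in> ex \<tau> X" and B: "B \<subseteq> X" "\<tau> B = \<tau> X"
  shows "x \<in> B"
proof (rule ccontr)
  assume nx: "x \<notin> B"
  have xX: "x \<in> X" and xn: "x \<notin> \<tau> (X - {x})" using x ex_mem by metis+
  have s1: "B \<subseteq> X - {x}" using B(1) nx by blast
  have s2: "X \<subseteq> \<tau> X" by (rule viol_parts(1)[OF V XE])
  have s3: "X - {x} \<subseteq> \<tau> B" using s2 B(2) by blast
  have s4: "X - {x} \<subseteq> E" using XE by blast
  have e: "\<tau> (X - {x}) = \<tau> B" by (rule viol_parts(2)[OF V s1 s3 s4])
  have "x \<in> \<tau> X" using s2 xX by blast
  hence "x \<in> \<tau> (X - {x})" using e B(2) by (simp only:)
  thus False using xn by contradiction
qed

lemma viol_sup: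
  assumes V: "violator_space E \<tau>" and XE: "X \<subseteq> E"
    and x: "x \<in> \<Inter>{B. B \<subseteq> X \<and> \<tau> B = \<tau> X}"
  shows "x \<in> ex \<tau> X"
proof -
  have xX: "x \<in> X" using x by blast
  show ?thesis
  proof (rule ccontr)
    assume "x \<notin> ex \<tau> X"
    hence xt: "x \<in> \<tau> (X - {x})" using xX ex_mem by metis
    have s4: "X - {x} \<subseteq> E" using XE by blast
    have "X - {x} \<subseteq> \<tau> (X - {x})" by (rule viol_parts(1)[OF V s4])
    hence s3: "X \<subseteq> \<tau> (X - {x})" using xt by blast
    have s1: "X - {x} \<subseteq> X" by blast
    have e: "\<tau> X = \<tau> (X - {x})" by (rule viol_parts(2)[OF V s1 s3 XE])
    have "X - {x} \<in> {B. B \<subseteq> X \<and> \<tau> B = \<tau> X}" using s1 e by simp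
    hence "x \<in> X - {x}" using x by (rule InterD[rotated])
    thus False by blast
  qed
qed

lemma conv_sub:
  assumes V: "convex_space E \<tau>" and XE: "X \<subseteq> E"
    and x: "x \<in> ex \<tau> X" and B: "B \<subseteq> X" "\<tau> B = \<tau> X"
  shows "x \<in> B"
proof (rule ccontr)
  assume nx: "x \<notin> B"
  have xX: "x \<in> X" and xn: "x \<notin> \<tau> (X - {x})" using x ex_mem by metis+
  have s1: "B \<subseteq> X - {x}" using B(1) nx by blast
  have s2: "X \<subseteq> \<tau> X" by (rule conv_parts(1)[OF V XE])
  have s1': "X - {x} \<subseteq> X" by blast
  have e: "\<tau> (X - {x}) = \<tau> B" by (rule conv_parts(2)[OF V s1 s1' XE B(2)])
  have "x \<in> \<tau> X" using s2 xX by blast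
  hence "x \<in> \<tau> (X - {x})" using e B(2) by (simp only:)
  thus False using xn by contradiction
qed

theorem mainTheorem13:
  fixes E :: "'a set" and \<tau> :: "'a set \<Rightarrow> 'a set"
  assumes "finite E"
  shows "(violator_space E \<tau> \<longrightarrow>
            (\<forall>X. X \<subseteq> E \<longrightarrow> ex \<tau> X = \<Inter>{B. B \<subseteq> X \<and> \<tau> B = \<tau> X}))
       \<and> (convex_space E \<tau> \<longrightarrow>
            (\<forall>X. X \<subseteq> E \<longrightarrow> ex \<tau> X \<subseteq> \<Inter>{B. B \<subseteq> X \<and> \<tau> B = \<tau> X}))"
proof (intro conjI impI allI)
  fix X assume V: "violator_space E \<tau>" and XE: "X \<subseteq> E"
  show "ex \<tau> X = \<Inter>{B. B \<subseteq> X \<and> \<tau> B = \<tau> X}"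
  proof (rule equalityI)
    show "ex \<tau> X \<subseteq> \<Inter>{B. B \<subseteq> X \<and> \<tau> B = \<tau> X}"
      using viol_sub[OF V XE] by blast
    show "\<Inter>{B. B \<subseteq> X \<and> \<tau> B = \<tau> X} \<subseteq> ex \<tau> X"
      using viol_sup[OF V XE] by blast
  qed
next
  fix X assume V: "convex_space E \<tau>" and XE: "X \<subseteq> E"
  show "ex \<tau> X \<subseteq> \<Inter>{B. B \<subseteq> X \<and> \<tau> B = \<tau> X}"
    using conv_sub[OF V XE] by blast
qed

end
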